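(* Assume $\Lambda$ is $b$-dependent for some $b>0$ and $\mathbb{E}[e^{\alpha\Lambda(Q_1)}]<\infty$ for all $\alpha>0$. Let $s>0$ and $A\subset\mathbb{R}^d$ compact with $|\partial A|=0$. Then $\Lambda(r\partial A\oplus Q_s)$ is exponentially equivalent to zero as $r\to\infty$, i.e. for every $\delta>0$, $$\lim_{r\to\infty}r^{-d}\log\mathbb{P}\big(\Lambda(r\partial A\oplus Q_s)>\delta r^d\big)=-\infty.$$
   Context: $\Lambda$ is a stationary random locally finite Borel measure on $\mathbb{R}^d$. $Q_s=[-s/2,s/2]^d$. $\Lambda$ is $b$-dependent if its restrictions to sets at distance $>b$ are independent. For $A,B\subset\mathbb{R}^d$, $A\oplus B=\bigcup_{a\in A}(a+B)$; $\partial A$ is the topological boundary; $|\cdot|$ is Lebesgue measure. *)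

theory Defs
  imports "HOL-Probability.Probability"
begin

definition cube :: "real \<Rightarrow> 'a::euclidean_space set" where
  "cube s = cbox (- ((s/2) *\<^sub>R One)) ((s/2) *\<^sub>R One)"

definition msum :: "'a::real_vector set \<Rightarrow> 'a set \<Rightarrow> 'a set" where
  "msum A B = {a + c | a c. a \<in> A \<and> c \<in> B}"

definition random_lf_measure :: "'w measure \<Rightarrow> ('w \<Rightarrow> 'a::euclidean_space measure) \<Rightarrow> bool" where
  "random_lf_measure M L \<longleftrightarrow> prob_space M \<and>
     (\<forall>\<omega>\<in>space M. sets (L \<omega>) = sets borel \<and>
        (\<forall>B\<in>sets borel. bounded B \<longrightarrow> emeasure (L \<omega>) B < \<infinity>)) \<and>
     (\<forall>B\<in>sets borel. (\<lambda>\<omega>. emeasure (L \<omega>) B) \<in> borel_measurable M)"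

text \<open>Stationarity: for every shift x, all finite-dimensional distributions of the
  shifted measure B \<mapsto> L(B + x) coincide with those of L (equivalently, the laws
  of the shifted and unshifted random measures coincide).\<close>
definition stationary_rm :: "'w measure \<Rightarrow> ('w \<Rightarrow> 'a::euclidean_space measure) \<Rightarrow> bool" where
  "stationary_rm M L \<longleftrightarrow>
     (\<forall>x::'a. \<forall>n::nat. \<forall>B::nat \<Rightarrow> 'a set. (\<forall>i<n. B i \<in> sets borel) \<longrightarrow>
        distr M (PiM {..<n} (\<lambda>_. borel)) (\<lambda>\<omega>. \<lambda>i\<in>{..<n}. emeasure (L \<omega>) ((\<lambda>y. y + x) ` B i))
      = distr M (PiM {..<n} (\<lambda>_. borel)) (\<lambda>\<omega>. \<lambda>i\<in>{..<n}. emeasure (L \<omega>) (B i)))"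

definition restr_sigma :: "'w measure \<Rightarrow> ('w \<Rightarrow> 'a::euclidean_space measure) \<Rightarrow> 'a set \<Rightarrow> 'w set set" where
  "restr_sigma M L S = sigma_sets (space M)
     {{\<omega>\<in>space M. emeasure (L \<omega>) (C \<inter> S) \<in> T} | C T. C \<in> sets borel \<and> T \<in> sets (borel :: ennreal measure)}"

definition b_dependent :: "'w measure \<Rightarrow> ('w \<Rightarrow> 'a::euclidean_space measure) \<Rightarrow> real \<Rightarrow> bool" where
  "b_dependent M L b \<longleftrightarrow>
     (\<forall>S1\<in>sets borel. \<forall>S2\<in>sets borel. setdist S1 S2 > b \<longrightarrow>
        prob_space.indep_set M (restr_sigma M L S1) (restr_sigma M L S2))"

definition ln_ext :: "real \<Rightarrow> ereal" where
  "ln_ext x = (if x = 0 then -\<infinity> else ereal (ln x))"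

end

theory Submission
  imports Defs
begin

definition lat :: "'a::euclidean_space set" where
  "lat = {z. \<forall>i\<in>Basis. z \<bullet> i \<in> \<int>}"

definition fl :: "'a::euclidean_space \<Rightarrow> 'a" where
  "fl x = (\<Sum>i\<in>Basis. of_int \<lfloor>x \<bullet> i\<rfloor> *\<^sub>R i)"

lemma fl_inner: "i \<in> Basis \<Longrightarrow> fl x \<bullet> i = of_int \<lfloor>x \<bullet> i\<rfloor>"
  unfolding fl_def by (simp add: inner_sum_left_Basis)

lemma fl_lat: "fl x \<in> lat"
  unfolding lat_def by (simp add: fl_inner)

lemma in_cell_fl: "x \<in> cbox (fl x) (fl x + One)"
  unfolding mem_box by (simp add: fl_inner inner_add_left)

lemma emeasure_lebesgue_borel:
  assumes "A \<in> sets borel" shows "emeasure lebesgue A = emeasure lborel A"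
  using assms by (simp add: emeasure_completion)

lemma emeasure_box_unit: "emeasure lborel (box z (z + One)) = (1::ennreal)"
  by (simp add: emeasure_lborel_box_eq inner_add_left)

lemma box_disjoint:
  assumes "z \<in> lat" "z' \<in> lat" "z \<noteq> z'"
  shows "box z (z + One) \<inter> box z' (z' + One) = {}"
proof (rule ccontr)
  assume "box z (z + One) \<inter> box z' (z' + One) \<noteq> {}"
  then obtain x where x: "x \<in> box z (z + One)" "x \<in> box z' (z' + One)" by blast
  obtain i where i: "i \<in> Basis" "z \<bullet> i \<noteq> z' \<bullet> i" using assms(3) euclidean_eqI by blast
  obtain k where k: "z \<bullet> i = of_int k" using assms(1) i(1) unfolding lat_def by (auto elim!: Ints_cases)
  obtain k' where k': "z' \<bullet> i = of_int k'" using assms(2) i(1) unfolding lat_def by (auto elim!: Ints_cases)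
  have "of_int k < x \<bullet> i" "x \<bullet> i < of_int k + 1" "of_int k' < x \<bullet> i" "x \<bullet> i < of_int k' + 1"
    using x i(1) k k' unfolding mem_box by (auto simp: inner_add_left)
  then have "k = k'" by linarith
  then show False using i k k' by simp
qed

lemma lat_finite_count:
  assumes G: "G \<subseteq> lat" and sub: "\<And>z. z \<in> G \<Longrightarrow> box z (z + One) \<subseteq> T"
    and T: "T \<in> sets borel" and Tf: "emeasure lborel T < \<infinity>"
  shows "finite G \<and> real (card G) \<le> measure lborel T"
proof -
  have disj: "disjoint_family_on (\<lambda>z. box z (z+One)) G"
    unfolding disjoint_family_on_def
  proof (intro ballI impI)
    fix m n assume "m \<in> G" "n \<in> G" "m \<noteq> n"
    then show "box m (m + One) \<inter> box n (n + One) = {}" using G by (intro box_disjoint) auto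
  qed
  have bnd: "card F \<le> nat \<lceil>measure lborel T\<rceil>" if F: "finite F" "F \<subseteq> G" for F
  proof -
    have "of_nat (card F) = (\<Sum>z\<in>F. emeasure lborel (box z (z + One)))"
      by (simp add: emeasure_box_unit)
    also have "\<dots> = emeasure lborel (\<Union>z\<in>F. box z (z + One))"
      using disjoint_family_on_mono[OF F(2) disj] F(1) by (intro sum_emeasure) auto
    also have "\<dots> \<le> emeasure lborel T"
      using sub F T by (intro emeasure_mono) auto
    also have "\<dots> = ennreal (measure lborel T)"
      using Tf by (simp add: emeasure_eq_ennreal_measure less_top)
    finally have "real (card F) \<le> measure lborel T"
      by (metis ennreal_of_nat_eq_real_of_nat ennreal_le_iff measure_nonneg)
    then show ?thesis by linarith
  qed
  then have fin: "finite G" using finite_if_finite_subsets_card_bdd[of G] by blast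
  have "real (card G) \<le> measure lborel T"
  proof -
    have "of_nat (card G) = (\<Sum>z\<in>G. emeasure lborel (box z (z + One)))"
      by (simp add: emeasure_box_unit)
    also have "\<dots> = emeasure lborel (\<Union>z\<in>G. box z (z + One))"
      using disj fin by (intro sum_emeasure) auto
    also have "\<dots> \<le> emeasure lborel T"
      using sub T by (intro emeasure_mono) auto
    also have "\<dots> = ennreal (measure lborel T)"
      using Tf by (simp add: emeasure_eq_ennreal_measure less_top)
    finally show ?thesis
      by (metis ennreal_of_nat_eq_real_of_nat ennreal_le_iff measure_nonneg)
  qed
  with fin show ?thesis by blast
qed

definition nb :: "'a::euclidean_space set \<Rightarrow> real \<Rightarrow> 'a set" where
  "nb F e = msum F (cball 0 e)"

lemma compact_msum: fixes A :: "'a::real_normed_vector set" shows "compact A \<Longrightarrow> compact B \<Longrightarrow> compact (msum A B)"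
  unfolding msum_def using compact_sums[of A B] by simp

lemma compact_nb: "compact F \<Longrightarrow> compact (nb F e)"
  unfolding nb_def by (intro compact_msum compact_cball)

lemma nb_mono: "e \<le> e' \<Longrightarrow> nb F e \<subseteq> nb F e'"
  unfolding nb_def msum_def by fastforce

lemma nb_small:
  fixes F :: "'a::euclidean_space set"
  assumes F: "compact F" and F0: "emeasure lborel F = 0" and eta: "\<eta> > 0"
  shows "\<exists>e>0. \<forall>e'. 0 < e' \<and> e' \<le> e \<longrightarrow> measure lborel (nb F e') \<le> \<eta>"
proof -
  define An where "An n = nb F (1 / Suc n)" for n
  have Ans: "range An \<subseteq> sets lborel" unfolding An_def using compact_nb[OF F]
    by (auto intro: borel_compact)
  have dec: "decseq An" unfolding An_def decseq_def
    by (intro allI impI nb_mono) (simp add: frac_le)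
  have fin: "emeasure lborel (An n) \<noteq> \<infinity>" for n
  proof -
    have "bounded (An n)" unfolding An_def using compact_nb[OF F] compact_imp_bounded by auto
    then show ?thesis using emeasure_bounded_finite[of "An n"] by simp
  qed
  have inter: "(\<Inter>n. An n) = F"
  proof
    show "F \<subseteq> (\<Inter>n. An n)" unfolding An_def nb_def msum_def by force
  next
    show "(\<Inter>n. An n) \<subseteq> F"
    proof
      fix x assume x: "x \<in> (\<Inter>n. An n)"
      have d: "\<exists>a\<in>F. dist x a \<le> 1 / Suc n" for n
      proof -
        from x have "x \<in> An n" by blast
        then obtain a c where "a \<in> F" "norm c \<le> 1 / Suc n" "x = a + c"
          unfolding An_def nb_def msum_def by auto
        then show ?thesis by (intro bexI[of _ a]) (auto simp: dist_norm)
      qed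
      then have Fne: "F \<noteq> {}" by blast
      have "infdist x F \<le> 1 / Suc n" for n
        using d[of n] infdist_le order_trans by blast
      then have "infdist x F \<le> 0"
      proof -
        have "(\<lambda>n. 1 / real (Suc n)) \<longlonglongrightarrow> 0" by (rule LIMSEQ_inverse_real_of_nat[unfolded inverse_eq_divide])
        then show ?thesis using \<open>\<And>n. infdist x F \<le> 1 / Suc n\<close>
          by (intro LIMSEQ_le_const) (auto)
      qed
      then have "infdist x F = 0" using infdist_nonneg[of x F] by linarith
      then have "x \<in> closure F" using in_closure_iff_infdist_zero[OF Fne] by blast
      then show "x \<in> F" using compact_imp_closed[OF F] closure_closed by blast
    qed
  qed
  have "(\<lambda>n. emeasure lborel (An n)) \<longlonglongrightarrow> 0"
    using Lim_emeasure_decseq[OF Ans dec fin] inter F0 by simp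
  then have "\<forall>\<^sub>F n in sequentially. emeasure lborel (An n) < ennreal \<eta>"
    using eta by (intro order_tendstoD) auto
  then obtain n where n: "emeasure lborel (An n) < ennreal \<eta>"
    by (meson eventually_sequentially order_refl)
  show ?thesis
  proof (intro exI[of _ "1 / Suc n"] conjI allI impI)
    fix e' assume e': "0 < e' \<and> e' \<le> 1 / Suc n"
    have "emeasure lborel (nb F e') \<le> emeasure lborel (An n)"
      unfolding An_def using e' Ans by (intro emeasure_mono nb_mono) (auto simp: An_def)
    also have "\<dots> < ennreal \<eta>" by (rule n)
    finally have "emeasure lborel (nb F e') < ennreal \<eta>" .
    then show "measure lborel (nb F e') \<le> \<eta>"
      unfolding measure_def using eta
      by (metis enn2real_ennreal enn2real_mono less_imp_le order_less_le_trans ennreal_less_top)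
  qed simp
qed

lemma norm_cube: fixes q :: "'a::euclidean_space" assumes "q \<in> cube s" shows "norm q \<le> DIM('a) * (s/2)"
proof -
  have b: "\<bar>q \<bullet> i\<bar> \<le> s/2" if "i \<in> Basis" for i
    using assms that unfolding cube_def mem_box by (auto simp: abs_le_iff)
  have "norm q \<le> (\<Sum>i\<in>Basis. \<bar>q \<bullet> i\<bar>)" by (rule norm_le_l1)
  also have "\<dots> \<le> (\<Sum>i\<in>(Basis::'a set). s/2)" using b by (intro sum_mono) auto
  finally show ?thesis by simp
qed

lemma norm_cell: fixes x :: "'a::euclidean_space" assumes "y \<in> cbox (fl x) (fl x + One)" shows "norm (y - x) \<le> DIM('a)"
proof -
  have b: "\<bar>(y - x) \<bullet> i\<bar> \<le> 1" if "i \<in> Basis" for i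
  proof -
    have "of_int \<lfloor>x \<bullet> i\<rfloor> \<le> y \<bullet> i" "y \<bullet> i \<le> of_int \<lfloor>x \<bullet> i\<rfloor> + 1"
      using assms that unfolding mem_box by (auto simp: fl_inner inner_add_left)
    moreover have "of_int \<lfloor>x \<bullet> i\<rfloor> \<le> x \<bullet> i" "x \<bullet> i < of_int \<lfloor>x \<bullet> i\<rfloor> + 1" by linarith+
    ultimately show ?thesis unfolding inner_diff_left abs_le_iff by linarith
  qed
  have "norm (y - x) \<le> (\<Sum>i\<in>Basis. \<bar>(y - x) \<bullet> i\<bar>)" by (rule norm_le_l1)
  also have "\<dots> \<le> (\<Sum>i\<in>(Basis::'a set). 1)" using b by (intro sum_mono) auto
  finally show ?thesis by simp
qed

lemma cover_count:
  fixes F :: "'a::euclidean_space set"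
  assumes F: "compact F" and r: "r > 0" and s: "s \<ge> 0"
  defines "S \<equiv> msum ((\<lambda>x. r *\<^sub>R x) ` F) (cube s)"
  defines "c0 \<equiv> DIM('a) * (1 + s/2)"
  shows "finite (fl ` S) \<and> real (card (fl ` S)) \<le> r ^ DIM('a) * measure lborel (nb F (c0 / r))"
proof -
  define T where "T = (\<lambda>v. r *\<^sub>R v) ` nb F (c0 / r)"
  have cT: "compact T" unfolding T_def by (intro compact_scaling compact_nb F)
  have sub: "cbox (fl x) (fl x + One) \<subseteq> T" if x: "x \<in> S" for x
  proof
    fix y assume y: "y \<in> cbox (fl x) (fl x + One)"
    from x obtain a q where a: "a \<in> F" and q: "q \<in> cube s" and xe: "x = r *\<^sub>R a + q"
      unfolding S_def msum_def by auto
    have "norm (y - r *\<^sub>R a) \<le> norm (y - x) + norm q"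
      unfolding xe by (metis diff_add_eq_diff_diff_swap norm_triangle_ineq4 add.commute diff_diff_eq2 norm_triangle_sub)
    also have "\<dots> \<le> DIM('a) + DIM('a) * (s/2)" using norm_cell[OF y] norm_cube[OF q] by linarith
    finally have n: "norm (y - r *\<^sub>R a) \<le> c0" unfolding c0_def by (simp add: algebra_simps)
    define c where "c = (1/r) *\<^sub>R (y - r *\<^sub>R a)"
    have "norm c \<le> c0 / r" unfolding c_def using n r by (simp add: divide_right_mono)
    then have "a + c \<in> nb F (c0 / r)" unfolding nb_def msum_def using a by auto
    moreover have "y = r *\<^sub>R (a + c)" unfolding c_def using r by (simp add: algebra_simps)
    ultimately show "y \<in> T" unfolding T_def by blast
  qed
  have T': "T = (\<lambda>v. r *\<^sub>R v + 0) ` nb F (c0 / r)" unfolding T_def by simp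
  have "measure lebesgue T = \<bar>r\<bar> ^ DIM('a) * measure lebesgue (nb F (c0 / r))"
    unfolding T' by (rule measure_lebesgue_affine)
  moreover have "measure lebesgue T = measure lborel T"
    unfolding measure_def using cT by (simp add: emeasure_lebesgue_borel borel_compact)
  moreover have "measure lebesgue (nb F (c0 / r)) = measure lborel (nb F (c0 / r))"
    unfolding measure_def using compact_nb[OF F] by (simp add: emeasure_lebesgue_borel borel_compact)
  ultimately have mT: "measure lborel T = r ^ DIM('a) * measure lborel (nb F (c0 / r))" using r by simp
  have "finite (fl ` S) \<and> real (card (fl ` S)) \<le> measure lborel T"
  proof (rule lat_finite_count)
    show "fl ` S \<subseteq> lat" using fl_lat by auto
    show "box z (z + One) \<subseteq> T" if "z \<in> fl ` S" for z using that sub box_subset_cbox by blast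
    show "T \<in> sets borel" using cT by (simp add: borel_compact)
    show "emeasure lborel T < \<infinity>" using emeasure_bounded_finite[OF compact_imp_bounded[OF cT]] by simp
  qed
  then show ?thesis using mT by simp
qed

definition Y :: "('w \<Rightarrow> 'a::euclidean_space measure) \<Rightarrow> 'a set \<Rightarrow> 'w \<Rightarrow> real" where
  "Y L B \<omega> = enn2real (emeasure (L \<omega>) B)"

lemma rlf_prob: "random_lf_measure M L \<Longrightarrow> prob_space M"
  unfolding random_lf_measure_def by blast

lemma rlf_fin:
  assumes "random_lf_measure M L" "B \<in> sets borel" "bounded B" "\<omega> \<in> space M"
  shows "emeasure (L \<omega>) B = ennreal (Y L B \<omega>)"
proof -
  have "emeasure (L \<omega>) B < \<infinity>" using assms unfolding random_lf_measure_def by blast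
  then show ?thesis unfolding Y_def by (simp add: ennreal_enn2real_if less_top)
qed

lemma Y_meas[measurable]:
  assumes "random_lf_measure M L" "B \<in> sets borel"
  shows "Y L B \<in> borel_measurable M"
proof -
  have "(\<lambda>\<omega>. emeasure (L \<omega>) B) \<in> borel_measurable M" using assms unfolding random_lf_measure_def by blast
  then show ?thesis unfolding Y_def by measurable
qed

lemma Y_nonneg: "Y L B \<omega> \<ge> 0" unfolding Y_def by simp

lemma Y_empty: "random_lf_measure M L \<Longrightarrow> \<omega> \<in> space M \<Longrightarrow> Y L {} \<omega> = 0"
  unfolding Y_def by simp

lemma Y_mono:
  assumes "random_lf_measure M L" "A \<subseteq> B" "A \<in> sets borel" "B \<in> sets borel" "bounded B" "\<omega> \<in> space M"
  shows "Y L A \<omega> \<le> Y L B \<omega>"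
proof -
  have sL: "sets (L \<omega>) = sets borel" using assms unfolding random_lf_measure_def by blast
  have "emeasure (L \<omega>) A \<le> emeasure (L \<omega>) B" using assms sL by (intro emeasure_mono) auto
  moreover have "emeasure (L \<omega>) B < \<infinity>" using assms unfolding random_lf_measure_def by blast
  ultimately show ?thesis unfolding Y_def by (simp add: enn2real_mono)
qed

lemma Y_union:
  assumes "random_lf_measure M L" "A \<in> sets borel" "B \<in> sets borel" "bounded A" "bounded B" "\<omega> \<in> space M"
  shows "Y L (A \<union> B) \<omega> \<le> Y L A \<omega> + Y L B \<omega>"
proof -
  have sL: "sets (L \<omega>) = sets borel" using assms unfolding random_lf_measure_def by blast
  have "emeasure (L \<omega>) (A \<union> B) \<le> emeasure (L \<omega>) A + emeasure (L \<omega>) B"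
    using assms sL by (intro emeasure_subadditive) auto
  also have "\<dots> = ennreal (Y L A \<omega> + Y L B \<omega>)"
    using rlf_fin[OF assms(1,2,4,6)] rlf_fin[OF assms(1,3,5,6)] by (simp add: Y_nonneg)
  finally have "ennreal (Y L (A \<union> B) \<omega>) \<le> ennreal (Y L A \<omega> + Y L B \<omega>)"
    using rlf_fin[of M L "A \<union> B" \<omega>] assms by (simp del: ennreal_plus)
  then show ?thesis by (simp add: Y_nonneg add_nonneg_nonneg del: ennreal_plus)
qed

lemma Y_UN:
  assumes "random_lf_measure M L" "finite I" "\<And>i. i \<in> I \<Longrightarrow> A i \<in> sets borel"
    "\<And>i. i \<in> I \<Longrightarrow> bounded (A i)" "\<omega> \<in> space M"
  shows "Y L (\<Union>i\<in>I. A i) \<omega> \<le> (\<Sum>i\<in>I. Y L (A i) \<omega>)"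
  using assms(2-4)
proof (induction I rule: finite_induct)
  case empty then show ?case using Y_empty[OF assms(1,5)] by simp
next
  case (insert j I)
  have "Y L (\<Union>i\<in>insert j I. A i) \<omega> = Y L (A j \<union> (\<Union>i\<in>I. A i)) \<omega>" by simp
  also have "\<dots> \<le> Y L (A j) \<omega> + Y L (\<Union>i\<in>I. A i) \<omega>"
    using insert by (intro Y_union[OF assms(1) _ _ _ _ assms(5)]) (auto intro!: sets.finite_UN)
  also have "\<dots> \<le> Y L (A j) \<omega> + (\<Sum>i\<in>I. Y L (A i) \<omega>)" using insert by auto
  finally show ?case using insert by simp
qed

lemma stat_mgf:
  assumes rl: "random_lf_measure M L" and st: "stationary_rm M L"
    and B: "B \<in> sets borel" and Bx: "(\<lambda>y. y + x) ` B \<in> sets borel"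
  shows "(\<integral>\<^sup>+\<omega>. ennreal (exp (\<alpha> * Y L ((\<lambda>y. y + x) ` B) \<omega>)) \<partial>M)
       = (\<integral>\<^sup>+\<omega>. ennreal (exp (\<alpha> * Y L B \<omega>)) \<partial>M)"
proof -
  define N where "N = (PiM {..<1::nat} (\<lambda>_. borel) :: (nat \<Rightarrow> ennreal) measure)"
  define f where "f h = ennreal (exp (\<alpha> * enn2real (h (0::nat))))" for h :: "nat \<Rightarrow> ennreal"
  define T1 where "T1 \<omega> = (\<lambda>i\<in>{..<1::nat}. emeasure (L \<omega>) ((\<lambda>y. y + x) ` B))" for \<omega>
  define T2 where "T2 \<omega> = (\<lambda>i\<in>{..<1::nat}. emeasure (L \<omega>) B)" for \<omega>
  have eq: "distr M N T1 = distr M N T2"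
  proof -
    have "\<forall>i<1::nat. B \<in> sets borel" using B by simp
    then show ?thesis unfolding N_def T1_def T2_def
      using st[unfolded stationary_rm_def, rule_format, of 1 "\<lambda>_. B" x] by simp
  qed
  have m1: "(\<lambda>\<omega>. emeasure (L \<omega>) ((\<lambda>y. y + x) ` B)) \<in> borel_measurable M"
    using rl Bx unfolding random_lf_measure_def by blast
  have m2: "(\<lambda>\<omega>. emeasure (L \<omega>) B) \<in> borel_measurable M"
    using rl B unfolding random_lf_measure_def by blast
  have T1m: "T1 \<in> measurable M N" unfolding T1_def N_def by (rule measurable_restrict) (use m1 in auto)
  have T2m: "T2 \<in> measurable M N" unfolding T2_def N_def by (rule measurable_restrict) (use m2 in auto)
  have fm: "f \<in> borel_measurable N" unfolding f_def N_def by measurable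
  have "(\<integral>\<^sup>+\<omega>. ennreal (exp (\<alpha> * Y L ((\<lambda>y. y + x) ` B) \<omega>)) \<partial>M) = (\<integral>\<^sup>+\<omega>. f (T1 \<omega>) \<partial>M)"
    unfolding f_def T1_def Y_def by simp
  also have "\<dots> = (\<integral>\<^sup>+h. f h \<partial>distr M N T1)" using T1m fm by (simp add: nn_integral_distr)
  also have "\<dots> = (\<integral>\<^sup>+h. f h \<partial>distr M N T2)" by (simp add: eq)
  also have "\<dots> = (\<integral>\<^sup>+\<omega>. f (T2 \<omega>) \<partial>M)" using T2m fm by (simp add: nn_integral_distr)
  also have "\<dots> = (\<integral>\<^sup>+\<omega>. ennreal (exp (\<alpha> * Y L B \<omega>)) \<partial>M)"
    unfolding f_def T2_def Y_def by simp
  finally show ?thesis .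
qed

lemma indep_mgf:
  assumes rl: "random_lf_measure M L" and bd: "b_dependent M L b"
    and S1: "S1 \<in> sets borel" and S2: "S2 \<in> sets borel" and d: "setdist S1 S2 > b"
  shows "(\<integral>\<^sup>+\<omega>. ennreal (exp (\<alpha> * Y L S1 \<omega>)) * ennreal (exp (\<alpha> * Y L S2 \<omega>)) \<partial>M)
       = (\<integral>\<^sup>+\<omega>. ennreal (exp (\<alpha> * Y L S1 \<omega>)) \<partial>M) * (\<integral>\<^sup>+\<omega>. ennreal (exp (\<alpha> * Y L S2 \<omega>)) \<partial>M)"
proof -
  interpret prob_space M using rlf_prob[OF rl] .
  have ind: "indep_set (restr_sigma M L S1) (restr_sigma M L S2)"
    using bd S1 S2 d unfolding b_dependent_def by blast
  define X1 where "X1 \<omega> = ennreal (exp (\<alpha> * Y L S1 \<omega>))" for \<omega>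
  define X2 where "X2 \<omega> = ennreal (exp (\<alpha> * Y L S2 \<omega>))" for \<omega>
  have X1m: "X1 \<in> borel_measurable M" unfolding X1_def using Y_meas[OF rl S1] by measurable
  have X2m: "X2 \<in> borel_measurable M" unfolding X2_def using Y_meas[OF rl S2] by measurable
  define g where "g v = ennreal (exp (\<alpha> * enn2real v))" for v :: ennreal
  have gm: "g \<in> borel_measurable borel" unfolding g_def by measurable
  have gen: "sigma_sets (space M) {X -` A \<inter> space M | A. A \<in> sets borel} \<subseteq> restr_sigma M L S"
    if X: "X = (\<lambda>\<omega>. g (emeasure (L \<omega>) S))" for X S
    unfolding restr_sigma_def
  proof (rule sigma_sets_subseteq, safe)
    fix A :: "ennreal set" assume A: "A \<in> sets borel"
    have "g -` A \<inter> space borel \<in> sets borel" using measurable_sets[OF gm A] .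
    then have Tb: "g -` A \<in> sets (borel :: ennreal measure)" by simp
    have "X -` A \<inter> space M = {\<omega>\<in>space M. emeasure (L \<omega>) (UNIV \<inter> S) \<in> g -` A}"
      unfolding X by auto
    then show "\<exists>C T. X -` A \<inter> space M = {\<omega>\<in>space M. emeasure (L \<omega>) (C \<inter> S) \<in> T} \<and>
              C \<in> sets borel \<and> T \<in> sets borel"
      using Tb by (intro exI[of _ UNIV] exI[of _ "g -` A"]) auto
  qed
  have X1g: "X1 = (\<lambda>\<omega>. g (emeasure (L \<omega>) S1))" unfolding X1_def g_def Y_def ..
  have X2g: "X2 = (\<lambda>\<omega>. g (emeasure (L \<omega>) S2))" unfolding X2_def g_def Y_def ..
  have iv: "indep_var borel X1 borel X2"
    unfolding indep_var_eq
  proof (intro conjI)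
    show "random_variable borel X1" "random_variable borel X2" using X1m X2m by auto
    show "indep_set (sigma_sets (space M) {X1 -` A \<inter> space M |A. A \<in> sets borel})
                    (sigma_sets (space M) {X2 -` A \<inter> space M |A. A \<in> sets borel})"
      using ind gen[OF X1g] gen[OF X2g] unfolding indep_sets2_eq by blast
  qed
  have **: "(\<lambda>_. borel) = case_bool borel borel"
    by (rule ext, metis (full_types) bool.simps(3) bool.simps(4))
  have ivs: "indep_vars (\<lambda>_. borel) (case_bool X1 X2) UNIV"
    using iv unfolding indep_var_def ** .
  have "(\<integral>\<^sup>+\<omega>. (\<Prod>i\<in>UNIV. case_bool X1 X2 i \<omega>) \<partial>M) = (\<Prod>i\<in>UNIV. \<integral>\<^sup>+\<omega>. case_bool X1 X2 i \<omega> \<partial>M)"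
    by (rule indep_vars_nn_integral[OF _ ivs]) auto
  then show ?thesis unfolding X1_def X2_def by (simp add: UNIV_bool mult.commute)
qed

definition cell :: "'a::euclidean_space \<Rightarrow> 'a set" where
  "cell z = cbox z (z + One)"

definition sep :: "real \<Rightarrow> 'a::euclidean_space set \<Rightarrow> bool" where
  "sep m F \<longleftrightarrow> (\<forall>z\<in>F. \<forall>z'\<in>F. z \<noteq> z' \<longrightarrow> (\<exists>i\<in>Basis. m \<le> \<bar>z \<bullet> i - z' \<bullet> i\<bar>))"

lemma cell_translate: "cell z = (\<lambda>y. y + (z + (1/2) *\<^sub>R One)) ` cube 1"
proof -
  have "cell z = cbox ((z + (1/2) *\<^sub>R One) + (- ((1/2) *\<^sub>R One))) ((z + (1/2) *\<^sub>R One) + (1/2) *\<^sub>R One)"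
    unfolding cell_def by (simp add: algebra_simps flip: scaleR_add_left)
  also have "\<dots> = (\<lambda>x. (z + (1/2) *\<^sub>R One) + x) ` cube 1"
    unfolding cube_def by (rule cbox_translation)
  finally show ?thesis by (simp add: add.commute)
qed

lemma cell_borel: "cell z \<in> sets borel" unfolding cell_def by simp
lemma cell_bounded: "bounded (cell z)" unfolding cell_def by simp
lemma cell_ne: "cell z \<noteq> {}" unfolding cell_def by (simp add: box_ne_empty inner_add_left)

lemma cell_dist:
  assumes i: "i \<in> Basis" and m: "m \<le> \<bar>z \<bullet> i - z' \<bullet> i\<bar>" and x: "x \<in> cell z" and y: "y \<in> cell z'"
  shows "m - 1 \<le> dist x y"
proof -
  have "z \<bullet> i \<le> x \<bullet> i" "x \<bullet> i \<le> z \<bullet> i + 1" "z' \<bullet> i \<le> y \<bullet> i" "y \<bullet> i \<le> z' \<bullet> i + 1"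
    using x y i unfolding cell_def mem_box by (auto simp: inner_add_left)
  then have "m - 1 \<le> \<bar>(x - y) \<bullet> i\<bar>" using m unfolding inner_diff_left by linarith
  also have "\<dots> \<le> norm (x - y)" using i by (rule Basis_le_norm)
  finally show ?thesis by (simp add: dist_norm)
qed

lemma mgf_cells:
  fixes F :: "'a::euclidean_space set"
  assumes rl: "random_lf_measure M L" and st: "stationary_rm M L" and bd: "b_dependent M L b"
    and \<alpha>: "\<alpha> \<ge> 0" and m: "m \<ge> b + 2"
    and F: "finite F" "sep m F"
  shows "(\<integral>\<^sup>+\<omega>. ennreal (exp (\<alpha> * Y L (\<Union>z\<in>F. cell z) \<omega>)) \<partial>M)
        \<le> (\<integral>\<^sup>+\<omega>. ennreal (exp (\<alpha> * Y L (cube 1) \<omega>)) \<partial>M) ^ card F"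
  using F
proof (induction F rule: finite_induct)
  case empty
  interpret prob_space M using rlf_prob[OF rl] .
  show ?case by (simp add: Y_def emeasure_space_1)
next
  case (insert z F)
  interpret prob_space M using rlf_prob[OF rl] .
  define C where "C = (\<integral>\<^sup>+\<omega>. ennreal (exp (\<alpha> * Y L (cube 1) \<omega>)) \<partial>M)"
  have cb: "(\<lambda>y. y + (w + (1/2) *\<^sub>R One)) ` cube 1 \<in> sets borel" for w :: 'a
    using cell_borel[of w] unfolding cell_translate .
  have cellC: "(\<integral>\<^sup>+\<omega>. ennreal (exp (\<alpha> * Y L (cell w) \<omega>)) \<partial>M) = C" for w
    unfolding C_def cell_translate
    by (rule stat_mgf[OF rl st _ cb]) (simp add: cube_def)
  have sepF: "sep m F" using insert(4) unfolding sep_def by blast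
  have IH: "(\<integral>\<^sup>+\<omega>. ennreal (exp (\<alpha> * Y L (\<Union>z\<in>F. cell z) \<omega>)) \<partial>M) \<le> C ^ card F"
    using insert(3)[OF sepF] unfolding C_def .
  show ?case
  proof (cases "F = {}")
    case True
    then show ?thesis using cellC[of z] by (simp add: C_def)
  next
    case False
    define U where "U = (\<Union>z\<in>F. cell z)"
    have Ub: "U \<in> sets borel" unfolding U_def using insert(1) by (intro sets.finite_UN) (auto intro: cell_borel)
    have Ubd: "bounded U" unfolding U_def using insert(1) by (auto intro: cell_bounded)
    have dist: "b < setdist U (cell z)"
    proof -
      have "b + 1 \<le> setdist U (cell z)"
      proof (rule le_setdistI)
        show "U \<noteq> {}" unfolding U_def using False cell_ne by blast
        show "cell z \<noteq> {}" by (rule cell_ne)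
        fix x y assume x: "x \<in> U" and y: "y \<in> cell z"
        then obtain z' where z': "z' \<in> F" "x \<in> cell z'" unfolding U_def by blast
        then have "z' \<noteq> z" using insert(2) by blast
        then obtain i where i: "i \<in> Basis" "m \<le> \<bar>z' \<bullet> i - z \<bullet> i\<bar>"
          using insert(4) z'(1) unfolding sep_def by blast
        have "m - 1 \<le> dist x y" by (rule cell_dist[OF i z'(2) y])
        then show "b + 1 \<le> dist x y" using m by linarith
      qed
      then show ?thesis by linarith
    qed
    have "(\<integral>\<^sup>+\<omega>. ennreal (exp (\<alpha> * Y L (\<Union>z\<in>insert z F. cell z) \<omega>)) \<partial>M)
        \<le> (\<integral>\<^sup>+\<omega>. ennreal (exp (\<alpha> * Y L U \<omega>)) * ennreal (exp (\<alpha> * Y L (cell z) \<omega>)) \<partial>M)"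
    proof (rule nn_integral_mono)
      fix \<omega> assume \<omega>: "\<omega> \<in> space M"
      have "Y L (\<Union>z\<in>insert z F. cell z) \<omega> = Y L (U \<union> cell z) \<omega>" unfolding U_def
        by (simp add: Un_commute)
      also have "\<dots> \<le> Y L U \<omega> + Y L (cell z) \<omega>"
        by (rule Y_union[OF rl Ub cell_borel Ubd cell_bounded \<omega>])
      finally have "exp (\<alpha> * Y L (\<Union>z\<in>insert z F. cell z) \<omega>) \<le> exp (\<alpha> * Y L U \<omega>) * exp (\<alpha> * Y L (cell z) \<omega>)"
        using \<alpha> by (simp add: exp_add[symmetric] distrib_left[symmetric] mult_left_mono)
      then show "ennreal (exp (\<alpha> * Y L (\<Union>z\<in>insert z F. cell z) \<omega>)) \<le> ennreal (exp (\<alpha> * Y L U \<omega>)) * ennreal (exp (\<alpha> * Y L (cell z) \<omega>))"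
        by (simp add: ennreal_mult[symmetric] ennreal_leI)
    qed
    also have "\<dots> = (\<integral>\<^sup>+\<omega>. ennreal (exp (\<alpha> * Y L U \<omega>)) \<partial>M) * (\<integral>\<^sup>+\<omega>. ennreal (exp (\<alpha> * Y L (cell z) \<omega>)) \<partial>M)"
      by (rule indep_mgf[OF rl bd Ub cell_borel dist])
    also have "\<dots> \<le> C ^ card F * C" using IH unfolding U_def cellC by (intro mult_right_mono) auto
    also have "\<dots> = C ^ card (insert z F)" using insert(1,2) by (simp add: mult.commute)
    finally show ?thesis unfolding C_def .
  qed
qed

lemma markov_exp:
  assumes rl: "random_lf_measure M L" and U: "U \<in> sets borel" and \<alpha>: "\<alpha> > 0"
  shows "emeasure M {\<omega>\<in>space M. u < Y L U \<omega>} \<le> ennreal (exp (- \<alpha> * u)) * (\<integral>\<^sup>+\<omega>. ennreal (exp (\<alpha> * Y L U \<omega>)) \<partial>M)"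
proof -
  have ms: "{\<omega>\<in>space M. u < Y L U \<omega>} \<in> sets M" using Y_meas[OF rl U] by measurable
  have "emeasure M {\<omega>\<in>space M. u < Y L U \<omega>} = (\<integral>\<^sup>+\<omega>. indicator {\<omega>\<in>space M. u < Y L U \<omega>} \<omega> \<partial>M)"
    using ms by simp
  also have "\<dots> \<le> (\<integral>\<^sup>+\<omega>. ennreal (exp (- \<alpha> * u)) * ennreal (exp (\<alpha> * Y L U \<omega>)) \<partial>M)"
  proof (rule nn_integral_mono)
    fix \<omega> assume "\<omega> \<in> space M"
    show "indicator {\<omega> \<in> space M. u < Y L U \<omega>} \<omega> \<le> ennreal (exp (- \<alpha> * u)) * ennreal (exp (\<alpha> * Y L U \<omega>))"
    proof (cases "u < Y L U \<omega>")
      case True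
      then have "0 \<le> - \<alpha> * u + \<alpha> * Y L U \<omega>" using \<alpha> by (simp add: algebra_simps)
      then have "1 \<le> exp (- \<alpha> * u) * exp (\<alpha> * Y L U \<omega>)" by (simp add: exp_add[symmetric])
      then show ?thesis using True \<open>\<omega> \<in> space M\<close>
        by (simp add: ennreal_mult[symmetric] indicator_def)
    qed (simp add: indicator_def)
  qed
  also have "\<dots> = ennreal (exp (- \<alpha> * u)) * (\<integral>\<^sup>+\<omega>. ennreal (exp (\<alpha> * Y L U \<omega>)) \<partial>M)"
  proof -
    have "(\<lambda>\<omega>. ennreal (exp (\<alpha> * Y L U \<omega>))) \<in> borel_measurable M" using Y_meas[OF rl U] by measurable
    then show ?thesis by (rule nn_integral_cmult)
  qed
  finally show ?thesis .
qed

lemma mgf_ge1: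
  assumes rl: "random_lf_measure M L" and \<alpha>: "\<alpha> \<ge> 0"
  shows "1 \<le> (\<integral>\<^sup>+\<omega>. ennreal (exp (\<alpha> * Y L U \<omega>)) \<partial>M)"
proof -
  interpret prob_space M using rlf_prob[OF rl] .
  have "(\<integral>\<^sup>+\<omega>. 1 \<partial>M) \<le> (\<integral>\<^sup>+\<omega>. ennreal (exp (\<alpha> * Y L U \<omega>)) \<partial>M)"
    using \<alpha> by (intro nn_integral_mono) (simp add: Y_nonneg)
  then show ?thesis by (simp add: emeasure_space_1)
qed

lemma card_residues: "card (PiE (Basis::'a::euclidean_space set) (\<lambda>_. {0..<int m})) = m ^ DIM('a)"
  by (simp add: card_PiE)

lemma lat_floor: "z \<in> lat \<Longrightarrow> i \<in> Basis \<Longrightarrow> z \<bullet> i = of_int \<lfloor>z \<bullet> i\<rfloor>"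
  unfolding lat_def by (auto elim!: Ints_cases)

lemma tail_bound:
  fixes F :: "'a::euclidean_space set" and L :: "'w \<Rightarrow> 'a measure"
  assumes rl: "random_lf_measure M L" and st: "stationary_rm M L" and bd: "b_dependent M L b"
    and b: "b > 0" and \<alpha>: "\<alpha> > 0" and F: "compact F" and r: "r > 0" and s: "s \<ge> 0" and t: "t > 0"
    and Cfin: "(\<integral>\<^sup>+\<omega>. ennreal (exp (\<alpha> * Y L (cube 1) \<omega>)) \<partial>M) < \<infinity>"
  defines "S \<equiv> msum ((\<lambda>x. r *\<^sub>R x) ` F) (cube s)"
  defines "m \<equiv> nat \<lceil>b\<rceil> + 2"
  defines "K \<equiv> m ^ DIM('a)"
  defines "c \<equiv> enn2real (\<integral>\<^sup>+\<omega>. ennreal (exp (\<alpha> * Y L (cube 1) \<omega>)) \<partial>M)"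
  shows "emeasure M {\<omega>\<in>space M. emeasure (L \<omega>) S > ennreal t}
          \<le> ennreal (real K * exp (- \<alpha> * (t / real K)) * c ^ card (fl ` S))"
proof -
  interpret prob_space M using rlf_prob[OF rl] .
  define G where "G = fl ` S"
  have cS: "compact S" unfolding S_def
    by (intro compact_msum compact_scaling F) (simp add: cube_def)
  have finG: "finite G" unfolding G_def using cover_count[OF F r s] unfolding S_def by blast
  have Glat: "G \<subseteq> lat" unfolding G_def using fl_lat by auto
  define C where "C = (\<integral>\<^sup>+\<omega>. ennreal (exp (\<alpha> * Y L (cube 1) \<omega>)) \<partial>M)"
  have C1: "1 \<le> C" unfolding C_def using mgf_ge1[OF rl] \<alpha> by simp
  have Cc: "C = ennreal c" unfolding c_def C_def[symmetric] using Cfin unfolding C_def[symmetric]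
    by (simp add: ennreal_enn2real_if less_top)
  have c0: "0 \<le> c" unfolding c_def by simp
  have c1: "1 \<le> c" using C1 Cc c0 by (metis ennreal_1 ennreal_le_iff)
  define R where "R = PiE (Basis::'a set) (\<lambda>_. {0..<int m})"
  have finR: "finite R" unfolding R_def by (intro finite_PiE) auto
  have cardR: "card R = K" unfolding R_def K_def by (rule card_residues)
  have mpos: "m > 0" unfolding m_def by simp
  have Kpos: "real K > 0" unfolding K_def using mpos by simp
  define cls where "cls \<rho> = {z\<in>G. \<forall>i\<in>Basis. \<lfloor>z \<bullet> i\<rfloor> mod int m = \<rho> i}" for \<rho>
  define U where "U \<rho> = (\<Union>z\<in>cls \<rho>. cell z)" for \<rho>
  have finc: "finite (cls \<rho>)" for \<rho> unfolding cls_def using finG by simp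
  have Ub: "U \<rho> \<in> sets borel" for \<rho> unfolding U_def using finc by (intro sets.finite_UN) (auto intro: cell_borel)
  have Ubd: "bounded (U \<rho>)" for \<rho> unfolding U_def using finc by (auto intro: cell_bounded)
  have sepc: "sep (real m) (cls \<rho>)" for \<rho>
    unfolding sep_def
  proof (intro ballI impI)
    fix z z' assume z: "z \<in> cls \<rho>" and z': "z' \<in> cls \<rho>" and ne: "z \<noteq> z'"
    obtain i where i: "i \<in> Basis" "z \<bullet> i \<noteq> z' \<bullet> i" using ne euclidean_eqI by blast
    have zl: "z \<in> lat" "z' \<in> lat" using z z' Glat unfolding cls_def by auto
    define a where "a = \<lfloor>z \<bullet> i\<rfloor>"
    define a' where "a' = \<lfloor>z' \<bullet> i\<rfloor>"
    have za: "z \<bullet> i = of_int a" "z' \<bullet> i = of_int a'" unfolding a_def a'_def using lat_floor zl i(1) by auto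
    have neq: "a - a' \<noteq> 0" using i(2) za by auto
    have "a mod int m = a' mod int m" using z z' i(1) unfolding cls_def a_def a'_def by auto
    then have "int m dvd a - a'" by (simp add: mod_eq_dvd_iff)
    then have "\<bar>int m\<bar> \<le> \<bar>a - a'\<bar>" using neq by (rule dvd_imp_le_int[rotated])
    then have "real m \<le> \<bar>real_of_int (a - a')\<bar>" by linarith
    then show "\<exists>i\<in>Basis. real m \<le> \<bar>z \<bullet> i - z' \<bullet> i\<bar>" using i(1) za by (intro bexI[of _ i]) auto
  qed
  have mb: "real m \<ge> b + 2" unfolding m_def using b by linarith
  have coverS: "S \<subseteq> (\<Union>\<rho>\<in>R. U \<rho>)"
  proof
    fix x assume x: "x \<in> S"
    define z where "z = fl x"
    define \<rho> where "\<rho> = restrict (\<lambda>i. \<lfloor>z \<bullet> i\<rfloor> mod int m) Basis"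
    have "\<rho> \<in> R" unfolding R_def \<rho>_def using mpos by auto
    moreover have "z \<in> cls \<rho>" unfolding cls_def \<rho>_def G_def z_def using x by auto
    moreover have "x \<in> cell z" unfolding cell_def z_def by (rule in_cell_fl)
    ultimately show "x \<in> (\<Union>\<rho>\<in>R. U \<rho>)" unfolding U_def by blast
  qed
  have UUb: "(\<Union>\<rho>\<in>R. U \<rho>) \<in> sets borel" using finR Ub by (intro sets.finite_UN) auto
  have UUbd: "bounded (\<Union>\<rho>\<in>R. U \<rho>)" using finR Ubd by auto
  define Ev where "Ev \<rho> = {\<omega>\<in>space M. t / real K < Y L (U \<rho>) \<omega>}" for \<rho>
  have Evm: "Ev \<rho> \<in> sets M" for \<rho> unfolding Ev_def using Y_meas[OF rl Ub] by measurable
  have incl: "{\<omega>\<in>space M. emeasure (L \<omega>) S > ennreal t} \<subseteq> (\<Union>\<rho>\<in>R. Ev \<rho>)"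
  proof
    fix \<omega> assume "\<omega> \<in> {\<omega>\<in>space M. emeasure (L \<omega>) S > ennreal t}"
    then have \<omega>: "\<omega> \<in> space M" and gt: "emeasure (L \<omega>) S > ennreal t" by auto
    have "emeasure (L \<omega>) S = ennreal (Y L S \<omega>)"
      using rlf_fin[OF rl _ _ \<omega>] cS by (simp add: borel_compact compact_imp_bounded)
    then have "ennreal t < ennreal (Y L S \<omega>)" using gt by simp
    then have tY: "t < Y L S \<omega>" by (metis ennreal_leI leD not_le)
    have "Y L S \<omega> \<le> Y L (\<Union>\<rho>\<in>R. U \<rho>) \<omega>"
      using Y_mono[OF rl coverS _ UUb UUbd \<omega>] cS by (simp add: borel_compact)
    also have "\<dots> \<le> (\<Sum>\<rho>\<in>R. Y L (U \<rho>) \<omega>)" by (rule Y_UN[OF rl finR Ub Ubd \<omega>])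
    finally have sY: "t < (\<Sum>\<rho>\<in>R. Y L (U \<rho>) \<omega>)" using tY by linarith
    show "\<omega> \<in> (\<Union>\<rho>\<in>R. Ev \<rho>)"
    proof (rule ccontr)
      assume "\<omega> \<notin> (\<Union>\<rho>\<in>R. Ev \<rho>)"
      then have "\<forall>\<rho>\<in>R. Y L (U \<rho>) \<omega> \<le> t / real K" unfolding Ev_def using \<omega> by auto
      then have "(\<Sum>\<rho>\<in>R. Y L (U \<rho>) \<omega>) \<le> real (card R) * (t / real K)"
        by (metis sum_bounded_above)
      also have "\<dots> = t" using cardR Kpos by simp
      finally show False using sY by linarith
    qed
  qed
  have bnd: "emeasure M (Ev \<rho>) \<le> ennreal (exp (- \<alpha> * (t / real K)) * c ^ card G)" if "\<rho> \<in> R" for \<rho>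
  proof -
    have "emeasure M (Ev \<rho>) \<le> ennreal (exp (- \<alpha> * (t / real K))) * (\<integral>\<^sup>+\<omega>. ennreal (exp (\<alpha> * Y L (U \<rho>) \<omega>)) \<partial>M)"
      unfolding Ev_def by (rule markov_exp[OF rl Ub \<alpha>])
    also have "\<dots> \<le> ennreal (exp (- \<alpha> * (t / real K))) * C ^ card (cls \<rho>)"
      unfolding U_def C_def using \<alpha> mb
      by (intro mult_left_mono mgf_cells[OF rl st bd _ _ finc[of \<rho>] sepc[of \<rho>]]) auto
    also have "\<dots> = ennreal (exp (- \<alpha> * (t / real K)) * c ^ card (cls \<rho>))"
      unfolding Cc using c0 by (simp add: ennreal_power ennreal_mult)
    also have "\<dots> \<le> ennreal (exp (- \<alpha> * (t / real K)) * c ^ card G)"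
    proof (intro ennreal_leI mult_left_mono power_increasing)
      show "card (cls \<rho>) \<le> card G" unfolding cls_def using finG by (intro card_mono) auto
    qed (use c1 in auto)
    finally show ?thesis .
  qed
  have "emeasure M {\<omega>\<in>space M. emeasure (L \<omega>) S > ennreal t} \<le> emeasure M (\<Union>\<rho>\<in>R. Ev \<rho>)"
    using incl finR Evm by (intro emeasure_mono sets.finite_UN) auto
  also have "\<dots> \<le> (\<Sum>\<rho>\<in>R. emeasure M (Ev \<rho>))"
    using finR Evm by (intro emeasure_subadditive_finite) auto
  also have "\<dots> \<le> (\<Sum>\<rho>\<in>R. ennreal (exp (- \<alpha> * (t / real K)) * c ^ card G))"
    using bnd by (rule sum_mono)
  also have "\<dots> = ennreal (real K * exp (- \<alpha> * (t / real K)) * c ^ card G)"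
    using cardR c0 by (simp add: ennreal_mult ennreal_of_nat_eq_real_of_nat mult.assoc)
  finally show ?thesis unfolding G_def .
qed

theorem mainTheorem13:
  fixes M :: "'w measure" and L :: "'w \<Rightarrow> 'a::euclidean_space measure"
    and b s \<delta> :: real and A :: "'a set"
  assumes "random_lf_measure M L"
    and "stationary_rm M L"
    and "b > 0" and "b_dependent M L b"
    and "\<forall>\<alpha>>0. (\<integral>\<^sup>+ \<omega>. ennreal (exp (\<alpha> * enn2real (emeasure (L \<omega>) (cube 1)))) \<partial>M) < \<infinity>"
    and "s > 0"
    and "compact A" and "emeasure lborel (frontier A) = 0"
    and "\<delta> > 0"
  shows "((\<lambda>r. ereal (1 / r ^ DIM('a)) *
            ln_ext (measure M {\<omega>\<in>space M.
              emeasure (L \<omega>) (msum ((\<lambda>x. r *\<^sub>R x) ` frontier A) (cube s)) > ennreal (\<delta> * r ^ DIM('a))}))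
          \<longlongrightarrow> -\<infinity>) at_top"
proof -
  note rl = assms(1) and st = assms(2) and b = assms(3) and bd = assms(4) and mgf = assms(5)
    and s = assms(6) and cA = assms(7) and F0 = assms(8) and \<delta> = assms(9)
  define F where "F = frontier A"
  have cF: "compact F" unfolding F_def using cA by (rule compact_frontier)
  define d where "d = DIM('a)"
  have d1: "d \<ge> 1" unfolding d_def by (simp add: DIM_positive Suc_leI)
  define m where "m = nat \<lceil>b\<rceil> + 2"
  define K where "K = m ^ DIM('a)"
  have K1: "real K \<ge> 1" unfolding K_def m_def by simp
  define c0 where "c0 = real DIM('a) * (1 + s/2)"
  have c0: "c0 > 0" unfolding c0_def using s by simp
  show ?thesis
    unfolding tendsto_MInfty
  proof
    fix B :: real
    define \<alpha> where "\<alpha> = real K * (\<bar>B\<bar> + 3) / \<delta>"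
    have \<alpha>: "\<alpha> > 0" unfolding \<alpha>_def using K1 \<delta> by simp
    define C where "C = (\<integral>\<^sup>+\<omega>. ennreal (exp (\<alpha> * Y L (cube 1) \<omega>)) \<partial>M)"
    have Cfin: "C < \<infinity>" unfolding C_def Y_def using mgf \<alpha> by blast
    define c where "c = enn2real C"
    have C1: "1 \<le> C" unfolding C_def using mgf_ge1[OF rl] \<alpha> by simp
    have Cc: "C = ennreal c" unfolding c_def using Cfin by (simp add: ennreal_enn2real_if less_top)
    have c0': "0 \<le> c" unfolding c_def by simp
    have c1: "1 \<le> c" using C1 Cc c0' by (metis ennreal_1 ennreal_le_iff)
    define lc where "lc = ln c"
    have lc: "lc \<ge> 0" unfolding lc_def using c1 by simp
    define \<eta> where "\<eta> = 1 / (lc + 1)"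
    have \<eta>: "\<eta> > 0" unfolding \<eta>_def using lc by simp
    have \<eta>lc: "\<eta> * lc \<le> 1" unfolding \<eta>_def using lc by (simp add: field_simps)
    obtain e0 where e0: "e0 > 0" and e0b: "\<And>e'. 0 < e' \<Longrightarrow> e' \<le> e0 \<Longrightarrow> measure lborel (nb F e') \<le> \<eta>"
      using nb_small[OF cF F0[folded F_def] \<eta>] by blast
    define r0 where "r0 = max 1 (max (c0 / e0) (ln (real K)))"
    show "\<forall>\<^sub>F r in at_top. ereal (1 / r ^ DIM('a)) *
            ln_ext (measure M {\<omega>\<in>space M.
              emeasure (L \<omega>) (msum ((\<lambda>x. r *\<^sub>R x) ` frontier A) (cube s)) > ennreal (\<delta> * r ^ DIM('a))})
          < ereal B"
      using eventually_ge_at_top[of r0]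
    proof eventually_elim
      case (elim r)
      have r1: "r \<ge> 1" using elim unfolding r0_def by simp
      have r: "r > 0" using r1 by simp
      have rd: "r ^ DIM('a) \<ge> r" using r1 d1 unfolding d_def
        by (metis One_nat_def power_increasing power_one_right)
      have rdpos: "r ^ DIM('a) > 0" using r by simp
      have lnK: "ln (real K) \<le> r ^ DIM('a)" using elim rd unfolding r0_def by simp
      have "c0 / r \<le> e0" using elim r e0 unfolding r0_def by (simp add: divide_le_eq mult.commute pos_divide_le_eq)
      then have mnb: "measure lborel (nb F (c0 / r)) \<le> \<eta>" using c0 r by (intro e0b) auto
      define S where "S = msum ((\<lambda>x. r *\<^sub>R x) ` F) (cube s)"
      define N where "N = card (fl ` S)"
      have "real N \<le> r ^ DIM('a) * measure lborel (nb F (c0 / r))"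
        unfolding N_def S_def c0_def using cover_count[OF cF r] s by simp
      also have "\<dots> \<le> r ^ DIM('a) * \<eta>" using mnb rdpos by simp
      finally have Nb: "real N \<le> r ^ DIM('a) * \<eta>" .
      define t where "t = \<delta> * r ^ DIM('a)"
      have t: "t > 0" unfolding t_def using \<delta> rdpos by simp
      define E where "E = {\<omega>\<in>space M. emeasure (L \<omega>) S > ennreal t}"
      define X where "X = real K * exp (- \<alpha> * (t / real K)) * c ^ N"
      have Xpos: "X > 0" unfolding X_def using K1 c1 by simp
      have "emeasure M E \<le> ennreal X"
        unfolding E_def X_def N_def S_def K_def m_def c_def C_def
        using tail_bound[OF rl st bd b \<alpha> cF r _ t] s Cfin[unfolded C_def] by simp
      then have PX: "measure M E \<le> X" unfolding measure_def using Xpos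
        by (simp add: enn2real_leI)
      have at: "\<alpha> * (t / real K) = (\<bar>B\<bar> + 3) * r ^ DIM('a)"
        unfolding \<alpha>_def t_def using K1 \<delta> by (simp add: field_simps)
      have lnX: "ln X = ln (real K) - (\<bar>B\<bar> + 3) * r ^ DIM('a) + real N * lc"
        unfolding X_def lc_def using K1 c1 at by (simp add: ln_mult ln_realpow)
      have Nlc: "real N * lc \<le> r ^ DIM('a)"
      proof -
        have "real N * lc \<le> r ^ DIM('a) * \<eta> * lc" using Nb lc by (simp add: mult_right_mono)
        also have "\<dots> \<le> r ^ DIM('a) * 1" using \<eta>lc rdpos by (simp add: mult.assoc)
        finally show ?thesis by simp
      qed
      have Eeq: "{\<omega>\<in>space M. emeasure (L \<omega>) (msum ((\<lambda>x. r *\<^sub>R x) ` frontier A) (cube s)) > ennreal (\<delta> * r ^ DIM('a))} = E"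
        unfolding E_def S_def F_def t_def ..
      have goalE: "ereal (1 / r ^ DIM('a)) * ln_ext (measure M E) < ereal B"
      proof (cases "measure M E = 0")
        case True
        have h: "ereal (1 / r ^ DIM('a)) * ln_ext (measure M E) = - \<infinity>"
          using True rdpos r by (simp add: ln_ext_def)
        show ?thesis unfolding h by simp
      next
        case False
        then have P: "measure M E > 0" using measure_nonneg[of M E] by linarith
        have "ln (measure M E) \<le> ln X" using P PX Xpos by simp
        also have "\<dots> \<le> (- \<bar>B\<bar> - 1) * r ^ DIM('a)" unfolding lnX using lnK Nlc by (simp add: algebra_simps)
        finally have "ln (measure M E) / r ^ DIM('a) \<le> - \<bar>B\<bar> - 1" using rdpos by (simp add: divide_le_eq)
        then have lt: "ln (measure M E) / r ^ DIM('a) < B" by linarith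
        have h: "ereal (1 / r ^ DIM('a)) * ln_ext (measure M E) = ereal (ln (measure M E) / r ^ DIM('a))"
          using False by (simp add: ln_ext_def)
        show ?thesis unfolding h using lt by simp
      qed
      show ?case by (simp only: Eeq goalE)
    qed
  qed
qed

end
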